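(* Let $G=(V,E)$ be a graph whose vertex set $V$ is a discrete subset of $\mathbb{R}^n$ and such that every vertex has finite degree. Then $\bar\alpha(G)=\limsup_{R\to\infty}\bar\alpha(G_R)$, where $G_R$ is the finite induced subgraph of $G$ on $V_R=V\cap[-R,R]^n$.
   Context: For $A\subset V$, its density in $G$ is $\delta_G(A)=\limsup_{R\to\infty}\frac{|A\cap V_R|}{|V_R|}$ with $V_R=V\cap[-R,R]^n$. For infinite $G$, $\bar\alpha(G)=\sup\{\delta_G(A): A \text{ independent set of } G\}$; for a finite graph $F$ with vertex set $W$, $\bar\alpha(F)=\alpha(F)/|W|$ where $\alpha$ is the independence number. *)

theory Defs
  imports "HOL-Analysis.Analysis"
begin

definition graph_on :: "'v set \<Rightarrow> ('v \<Rightarrow> 'v \<Rightarrow> bool) \<Rightarrow> bool" where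
  "graph_on V E \<longleftrightarrow> (\<forall>x y. E x y \<longrightarrow> x \<in> V \<and> y \<in> V) \<and>
                     (\<forall>x y. E x y \<longrightarrow> E y x) \<and> (\<forall>x. \<not> E x x)"

definition finite_degrees :: "'v set \<Rightarrow> ('v \<Rightarrow> 'v \<Rightarrow> bool) \<Rightarrow> bool" where
  "finite_degrees V E \<longleftrightarrow> (\<forall>v\<in>V. finite {u. E v u})"

text \<open>Discrete subset of R^n in the sense needed (every V_R finite, i.e. closed discrete).\<close>
definition locally_finite_set :: "(real ^ 'n) set \<Rightarrow> bool" where
  "locally_finite_set V \<longleftrightarrow> (\<forall>R::real. finite {x\<in>V. \<forall>i. \<bar>x $ i\<bar> \<le> R})"

definition box_part :: "(real ^ 'n) set \<Rightarrow> real \<Rightarrow> (real ^ 'n) set" where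
  "box_part V R = V \<inter> {x. \<forall>i. \<bar>x $ i\<bar> \<le> R}"

definition indep_set :: "'v set \<Rightarrow> ('v \<Rightarrow> 'v \<Rightarrow> bool) \<Rightarrow> 'v set \<Rightarrow> bool" where
  "indep_set V E A \<longleftrightarrow> A \<subseteq> V \<and> (\<forall>x\<in>A. \<forall>y\<in>A. \<not> E x y)"

definition indep_num :: "'v set \<Rightarrow> ('v \<Rightarrow> 'v \<Rightarrow> bool) \<Rightarrow> nat" where
  "indep_num W E = Max {card A | A. indep_set W E A}"

definition alpha_bar_fin :: "'v set \<Rightarrow> ('v \<Rightarrow> 'v \<Rightarrow> bool) \<Rightarrow> real" where
  "alpha_bar_fin W E = real (indep_num W E) / real (card W)"

definition density :: "(real ^ 'n) set \<Rightarrow> (real ^ 'n) set \<Rightarrow> ereal" where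
  "density V A = Limsup at_top (\<lambda>R::real.
     ereal (real (card (A \<inter> box_part V R)) / real (card (box_part V R))))"

definition alpha_bar :: "(real ^ 'n) set \<Rightarrow> (real ^ 'n \<Rightarrow> real ^ 'n \<Rightarrow> bool) \<Rightarrow> ereal" where
  "alpha_bar V E = (SUP A \<in> {A. indep_set V E A}. density V A)"

end

theory Submission
  imports Defs
begin

lemma box_finite: "locally_finite_set V \<Longrightarrow> finite (box_part V R)"
proof -
  assume a: "locally_finite_set V"
  have e: "box_part V R = {x\<in>V. \<forall>i. \<bar>x $ i\<bar> \<le> R}" unfolding box_part_def by blast
  show ?thesis unfolding e using a unfolding locally_finite_set_def by blast
qed

lemma box_mono: "R \<le> R' \<Longrightarrow> box_part V R \<subseteq> box_part V R'"
proof
  fix x assume R: "R \<le> R'" and x: "x \<in> box_part V R"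
  have "\<bar>x $ i\<bar> \<le> R'" for i
  proof -
    have "\<bar>x $ i\<bar> \<le> R" using x unfolding box_part_def by blast
    then show ?thesis using R by linarith
  qed
  then show "x \<in> box_part V R'" using x unfolding box_part_def by blast
qed

lemma box_sub: "box_part V R \<subseteq> V"
  unfolding box_part_def by auto

lemma indep_fin:
  assumes "finite W"
  shows "finite {card A | A. indep_set W E A}" "{card A | A. indep_set W E A} \<noteq> {}"
proof -
  have "{card A | A. indep_set W E A} \<subseteq> {..card W}"
    using assms by (auto simp: indep_set_def intro: card_mono)
  then show "finite {card A | A. indep_set W E A}" using finite_subset by blast
  have "indep_set W E {}" by (simp add: indep_set_def)
  then show "{card A | A. indep_set W E A} \<noteq> {}" by blast
qed

lemma indep_le: "finite W \<Longrightarrow> indep_set W E A \<Longrightarrow> card A \<le> indep_num W E"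
  unfolding indep_num_def using indep_fin[of W E] by (intro Max_ge) auto

lemma indep_ex: "finite W \<Longrightarrow> \<exists>A. indep_set W E A \<and> card A = indep_num W E"
  unfolding indep_num_def using Max_in[OF indep_fin[of W E]] by auto

lemma indep_num_le: "finite W \<Longrightarrow> indep_num W E \<le> card W"
  using indep_ex[of W E] by (metis card_mono indep_set_def)

lemma fr_bounds: "finite W \<Longrightarrow> 0 \<le> alpha_bar_fin W E \<and> alpha_bar_fin W E \<le> 1"
  unfolding alpha_bar_fin_def using indep_num_le[of W E]
  by (cases "card W = 0") (auto simp: divide_le_eq_1)

lemma bounded_in_box:
  fixes S :: "(real ^ 'n) set"
  assumes "finite S"
  shows "\<exists>T. \<forall>R\<ge>T. S \<subseteq> {x. \<forall>i. \<bar>x $ i\<bar> \<le> R}"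
proof -
  obtain B where B: "\<forall>x\<in>S. norm x \<le> B"
    using finite_imp_bounded[OF assms] bounded_iff by blast
  show ?thesis
  proof (rule exI[of _ B], intro allI impI subsetI CollectI)
    fix R x i assume BR: "B \<le> R" and xS: "x \<in> S"
    have "norm x \<le> B" using B xS by blast
    then show "\<bar>x $ i\<bar> \<le> R" using BR component_le_norm_cart[of x i] by linarith
  qed
qed

lemma limsup_ge:
  fixes g :: "real \<Rightarrow> ereal"
  assumes "\<And>y T. y < l \<Longrightarrow> \<exists>R\<ge>T. g R > ereal y"
  shows "ereal l \<le> Limsup at_top g"
proof (rule ccontr)
  assume "\<not> ereal l \<le> Limsup at_top g"
  then have "Limsup at_top g < ereal l" by simp
  then obtain z where z: "Limsup at_top g < z" "z < ereal l" using ereal_dense2 by blast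
  then obtain y where y: "z = ereal y" by (cases z) auto
  have "eventually (\<lambda>x. g x < z) at_top" using Limsup_lessD[OF z(1)] .
  then obtain T where T: "\<forall>x\<ge>T. g x < z" by (auto simp: eventually_at_top_linorder)
  from z y have "y < l" by simp
  from assms[OF this, of T] obtain R where "R \<ge> T" "g R > ereal y" by blast
  with T y show False by force
qed

lemma limsup_freq:
  fixes f :: "real \<Rightarrow> ereal"
  assumes "Limsup at_top f = ereal l" "d > 0"
  shows "\<exists>R\<ge>T. f R > ereal (l - d)"
proof (rule ccontr)
  assume "\<not> ?thesis"
  then have "eventually (\<lambda>R. f R \<le> ereal (l - d)) at_top"
    by (auto simp: eventually_at_top_linorder not_less)
  then have "Limsup at_top f \<le> ereal (l - d)" by (rule Limsup_bounded)
  with assms show False by simp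
qed


theorem lemma1:
  fixes V :: "(real ^ 'n) set" and E :: "real ^ 'n \<Rightarrow> real ^ 'n \<Rightarrow> bool"
  assumes "graph_on V E"
    and "locally_finite_set V"
    and "finite_degrees V E"
  shows "alpha_bar V E =
    Limsup at_top (\<lambda>R::real. ereal (alpha_bar_fin (box_part V R) E))"
proof -
  define fr where "fr R = alpha_bar_fin (box_part V R) E" for R
  have fin: "\<And>R. finite (box_part V R)" using box_finite assms(2) by blast
  have le: "alpha_bar V E \<le> Limsup at_top (\<lambda>R. ereal (fr R))"
    unfolding alpha_bar_def density_def
  proof (rule SUP_least)
    fix A assume "A \<in> {A. indep_set V E A}"
    hence iA: "indep_set V E A" by simp
    show "Limsup at_top (\<lambda>R. ereal (real (card (A \<inter> box_part V R)) / real (card (box_part V R))))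
          \<le> Limsup at_top (\<lambda>R. ereal (fr R))"
    proof (rule Limsup_mono, rule always_eventually, rule allI)
      fix R
      have "indep_set (box_part V R) E (A \<inter> box_part V R)" using iA by (auto simp: indep_set_def)
      hence "card (A \<inter> box_part V R) \<le> indep_num (box_part V R) E" using indep_le fin by blast
      then show "ereal (real (card (A \<inter> box_part V R)) / real (card (box_part V R))) \<le> ereal (fr R)"
        unfolding fr_def alpha_bar_fin_def by (simp add: divide_right_mono)
    qed
  qed
  have b0: "0 \<le> Limsup at_top (\<lambda>R. ereal (fr R))"
    by (rule le_Limsup) (auto simp: fr_def fr_bounds[OF fin])
  have b1: "Limsup at_top (\<lambda>R. ereal (fr R)) \<le> 1"
    by (rule Limsup_bounded) (auto simp: fr_def fr_bounds[OF fin])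
  obtain l where L: "Limsup at_top (\<lambda>R. ereal (fr R)) = ereal l"
    using b0 b1 by (cases "Limsup at_top (\<lambda>R. ereal (fr R))") auto
  have ge: "Limsup at_top (\<lambda>R. ereal (fr R)) \<le> alpha_bar V E"
  proof (cases "finite V")
    case True
    obtain T where T: "\<forall>R\<ge>T. V \<subseteq> {x. \<forall>i. \<bar>x $ i\<bar> \<le> R}" using bounded_in_box[OF True] by blast
    hence VRT: "\<And>R. R \<ge> T \<Longrightarrow> box_part V R = V" unfolding box_part_def by auto
    obtain A where A: "indep_set V E A" "card A = indep_num V E" using indep_ex True by blast
    have AV: "A \<inter> V = A" using A(1) by (auto simp: indep_set_def)
    have ev: "eventually (\<lambda>R. ereal (fr R) = ereal (real (card (A \<inter> box_part V R)) / real (card (box_part V R)))) at_top"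
      unfolding eventually_at_top_linorder using VRT
      by (intro exI[of _ T]) (auto simp: fr_def alpha_bar_fin_def A(2) AV)
    have "Limsup at_top (\<lambda>R. ereal (fr R)) = density V A" unfolding density_def using Limsup_eq[OF ev] .
    also have "\<dots> \<le> alpha_bar V E" unfolding alpha_bar_def using A(1) by (intro SUP_upper) auto
    finally show ?thesis .
  next
    case False
    have grow: "\<exists>T. \<forall>R\<ge>T. M \<le> card (box_part V R)" for M
    proof -
      obtain S where S: "S \<subseteq> V" "finite S" "card S = M" using infinite_arbitrarily_large[OF False] by blast
      obtain T where "\<forall>R\<ge>T. S \<subseteq> {x. \<forall>i. \<bar>x $ i\<bar> \<le> R}" using bounded_in_box[OF S(2)] by blast
      then have "\<forall>R\<ge>T. S \<subseteq> box_part V R" using S(1) by (auto simp: box_part_def)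
      then have "\<forall>R\<ge>T. M \<le> card (box_part V R)" using S(3) card_mono[OF fin] by blast
      thus ?thesis by blast
    qed
    define N where "N S = S \<union> {u. \<exists>v\<in>S. E v u}" for S
    have Nfin: "finite (N S)" if "finite S" "S \<subseteq> V" for S
    proof -
      have "{u. \<exists>v\<in>S. E v u} = (\<Union>v\<in>S. {u. E v u})" by auto
      moreover have "finite (\<Union>v\<in>S. {u. E v u})"
        using that assms(3) by (auto simp: finite_degrees_def)
      ultimately show ?thesis using that by (simp add: N_def)
    qed
    define I where "I R = (SOME A. indep_set (box_part V R) E A \<and> card A = indep_num (box_part V R) E)" for R
    have I: "indep_set (box_part V R) E (I R) \<and> card (I R) = indep_num (box_part V R) E" for R
      unfolding I_def using someI_ex[OF indep_ex[OF fin]] by blast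
    define P where "P k r R \<longleftrightarrow> R \<ge> real k + 1 \<and> R \<ge> r \<and> fr R > l - 1/(real k+2) \<and>
       real (card (N (box_part V r))) * (real k + 2) \<le> real (card (box_part V R)) \<and> 1 \<le> card (box_part V R)"
      for k :: nat and r R :: real
    have Pex: "\<exists>R. P k r R" for k r
    proof -
      obtain T where T: "\<forall>R\<ge>T. max 1 (card (N (box_part V r)) * (k+2)) \<le> card (box_part V R)"
        using grow by blast
      have d: "1/(real k+2) > 0" by simp
      obtain R where R: "R \<ge> max T (max (real k + 1) r)" "ereal (fr R) > ereal (l - 1/(real k+2))"
        using limsup_freq[OF L d] by blast
      have c: "card (N (box_part V r)) * (k+2) \<le> card (box_part V R)" "1 \<le> card (box_part V R)"
        using T R(1) by auto
      have "real (card (N (box_part V r)) * (k+2)) \<le> real (card (box_part V R))"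
        using c(1) of_nat_le_iff by blast
      then have "real (card (N (box_part V r))) * (real k + 2) \<le> real (card (box_part V R))" by (simp add: algebra_simps)
      then show ?thesis unfolding P_def using R c by (intro exI[of _ R]) auto
    qed
    define rs where "rs = rec_nat 0 (\<lambda>k r. SOME R. P k r R)"
    have rsS: "rs (Suc k) = (SOME R. P k (rs k) R)" for k unfolding rs_def by simp
    have rs_Suc: "P k (rs k) (rs (Suc k))" for k unfolding rsS using someI_ex[OF Pex] by blast
    have rs_mono: "rs j \<le> rs m" if "j \<le> m" for j m
    proof -
      have "rs i \<le> rs (Suc i)" for i using rs_Suc[of i] unfolding P_def by linarith
      then show ?thesis using lift_Suc_mono_le[of rs] that by blast
    qed
    define A where "A = (\<Union>k. I (rs (Suc k)) - N (box_part V (rs k)))"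
    have Aind: "indep_set V E A"
      unfolding indep_set_def
    proof safe
      fix x assume "x \<in> A"
      then obtain k where "x \<in> I (rs (Suc k))" unfolding A_def by blast
      then show "x \<in> V" using I[of "rs (Suc k)"] box_sub[of V "rs (Suc k)"] unfolding indep_set_def by blast
    next
      fix x y assume x: "x \<in> A" and y: "y \<in> A" and e: "E x y"
      from x obtain j where xj: "x \<in> I (rs (Suc j))" "x \<notin> N (box_part V (rs j))" by (auto simp: A_def)
      from y obtain m where ym: "y \<in> I (rs (Suc m))" "y \<notin> N (box_part V (rs m))" by (auto simp: A_def)
      have sym: "E y x" using assms(1) e by (auto simp: graph_on_def)
      consider "j = m" | "j < m" | "m < j" by linarith
      then show False
      proof cases
        case 1 then show False using I[of "rs (Suc j)"] xj ym e by (auto simp: indep_set_def)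
      next
        case 2
        have "x \<in> box_part V (rs (Suc j))" using xj I by (auto simp: indep_set_def)
        moreover have "box_part V (rs (Suc j)) \<subseteq> box_part V (rs m)"
          using 2 rs_mono[of "Suc j" m] box_mono by auto
        ultimately have "y \<in> N (box_part V (rs m))" using e unfolding N_def by auto
        with ym show False by simp
      next
        case 3
        have "y \<in> box_part V (rs (Suc m))" using ym I by (auto simp: indep_set_def)
        moreover have "box_part V (rs (Suc m)) \<subseteq> box_part V (rs j)"
          using 3 rs_mono[of "Suc m" j] box_mono by auto
        ultimately have "x \<in> N (box_part V (rs j))" using sym unfolding N_def by auto
        with xj show False by simp
      qed
    qed
    have lower: "real (card (A \<inter> box_part V (rs (Suc k)))) / real (card (box_part V (rs (Suc k))))
        > l - 2/(real k + 2)" for k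
    proof -
      let ?R = "rs (Suc k)"
      let ?Nk = "N (box_part V (rs k))"
      have Pk: "P k (rs k) ?R" by (rule rs_Suc)
      have sub: "I ?R - ?Nk \<subseteq> A \<inter> box_part V ?R" using I[of ?R] by (auto simp: A_def indep_set_def)
      have finNk: "finite ?Nk" using Nfin fin box_sub by blast
      have "card (I ?R) - card ?Nk \<le> card (I ?R - ?Nk)" using diff_card_le_card_Diff[OF finNk] .
      also have "\<dots> \<le> card (A \<inter> box_part V ?R)" using card_mono[OF _ sub] fin by blast
      finally have "card (I ?R) \<le> card (A \<inter> box_part V ?R) + card ?Nk" by linarith
      then have c1: "real (indep_num (box_part V ?R) E) \<le> real (card (A \<inter> box_part V ?R)) + real (card ?Nk)"
        using I[of ?R] by (metis of_nat_add of_nat_le_iff)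
      define c where "c = real (card (box_part V ?R))"
      have cpos: "c \<ge> 1" using Pk by (simp add: P_def c_def)
      have fR: "fr ?R = real (indep_num (box_part V ?R) E) / c" by (simp add: fr_def alpha_bar_fin_def c_def)
      have "real (card ?Nk) * (real k + 2) \<le> c" using Pk by (simp add: P_def c_def)
      then have nk: "real (card ?Nk) / c \<le> 1/(real k+2)" using cpos
        by (simp add: field_simps)
      have "fr ?R \<le> real (card (A \<inter> box_part V ?R)) / c + real (card ?Nk) / c"
        unfolding fR using c1 cpos by (simp add: add_divide_distrib[symmetric] divide_right_mono)
      moreover have "fr ?R > l - 1/(real k+2)" using Pk by (simp add: P_def)
      ultimately have "real (card (A \<inter> box_part V ?R)) / c > l - 2/(real k + 2)" using nk by linarith
      then show ?thesis by (simp add: c_def)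
    qed
    have "ereal l \<le> density V A" unfolding density_def
    proof (rule limsup_ge)
      fix y T assume yl: "y < l"
      obtain k :: nat where k: "max T (2/(l-y)) < real k" using reals_Archimedean2 by blast
      have k1: "T < real k" "2/(l-y) < real k" using k by auto
      have ly: "0 < l - y" using yl by simp
      have "2/(l-y) < real k + 2" using k1 by linarith
      then have "2 < (real k + 2) * (l - y)" using pos_divide_less_eq[OF ly, of 2 "real k + 2"] by blast
      then have "2 < (l - y) * (real k + 2)" by (simp only: mult.commute)
      moreover have kp: "0 < real k + 2" by simp
      ultimately have "2/(real k + 2) < l - y" using pos_divide_less_eq[OF kp, of 2 "l - y"] by blast
      then have yy: "y < real (card (A \<inter> box_part V (rs (Suc k)))) / real (card (box_part V (rs (Suc k))))"
        using lower[of k] by linarith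
      have "real k + 1 \<le> rs (Suc k)" using rs_Suc[of k] unfolding P_def by blast
      then have "rs (Suc k) \<ge> T" using k1 by linarith
      then show "\<exists>R\<ge>T. ereal y < ereal (real (card (A \<inter> box_part V R)) / real (card (box_part V R)))"
        using yy by (intro exI[of _ "rs (Suc k)"]) simp
    qed
    also have "\<dots> \<le> alpha_bar V E" unfolding alpha_bar_def
      by (rule SUP_upper) (rule CollectI, rule Aind)
    finally have "ereal l \<le> alpha_bar V E" .
    then show ?thesis by (simp only: L)
  qed
  have "alpha_bar V E = Limsup at_top (\<lambda>R. ereal (fr R))" using le ge by (rule antisym)
  then show ?thesis by (simp only: fr_def)
qed

end
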